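(* Let $\bar\tau>0$, let $h$ be any delay kernel as in the context, with Laplace transform $H$, and let $\alpha,\beta\in\mathbb{R}$ with $\beta<\alpha-1$. Then the characteristic equation $$\Big(z+\tfrac{1}{\bar\tau}\Big)^4-\alpha\Big(z+\tfrac{1}{\bar\tau}\Big)^2\tfrac{1}{\bar\tau^2}H(z)^2+\tfrac{\beta}{\bar\tau^4}H(z)^4=0$$ has a positive real root; hence the equilibrium is unstable, regardless of the kernel $h$.
   Context: A delay kernel is either a probability density $h:[0,\infty)\to[0,\infty)$ with $\int_0^\infty h=1$ and finite mean $\tau=\int_0^\infty t\,h(t)\,dt>0$, or the Dirac measure $\delta(t-\tau)$, $\tau>0$. Its Laplace transform is $H(z)=\int_0^\infty h(t)e^{-zt}\,dt$ (for the Dirac measure, $H(z)=e^{-z\tau}$), defined for $\operatorname{Re} z\ge 0$. The displayed equation is the characteristic equation of the linearization at an equilibrium of two coupled Wilson–Cowan excitatory/inhibitory pairs with time constant $\bar\tau>0$ and distributed delays; $\alpha,\beta$ are real coefficients determined by coupling weights and sigmoid slopes. The equilibrium is called unstable if some root has positive real part. *)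

theory Defs
  imports "HOL-Analysis.Analysis"
begin

text \<open>A delay kernel: either a probability density on [0,inf) with finite positive
mean, or a Dirac mass at tau > 0.\<close>
datatype kernel = Density "real \<Rightarrow> real" | Dirac real

definition valid_kernel :: "kernel \<Rightarrow> bool" where
  "valid_kernel k = (case k of
      Density h \<Rightarrow> (\<forall>t\<ge>0. 0 \<le> h t) \<and> (h has_integral 1) {0..}
                  \<and> (\<lambda>t. t * h t) integrable_on {0..}
                  \<and> integral {0..} (\<lambda>t. t * h t) > 0
    | Dirac \<tau> \<Rightarrow> \<tau> > 0)"

text \<open>Laplace transform (meaningful for Re z >= 0).\<close>
definition kernel_LT :: "kernel \<Rightarrow> complex \<Rightarrow> complex" where
  "kernel_LT k z = (case k of
      Density h \<Rightarrow> integral {0..} (\<lambda>t. complex_of_real (h t) * exp (- z * complex_of_real t))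
    | Dirac \<tau> \<Rightarrow> exp (- z * complex_of_real \<tau>))"

definition char_fun :: "real \<Rightarrow> real \<Rightarrow> real \<Rightarrow> (complex \<Rightarrow> complex) \<Rightarrow> complex \<Rightarrow> complex" where
  "char_fun tb \<alpha> \<beta> H z =
     (z + 1 / of_real tb) ^ 4
     - of_real \<alpha> * (z + 1 / of_real tb) ^ 2 * (1 / of_real tb ^ 2) * H z ^ 2
     + of_real \<beta> / of_real tb ^ 4 * H z ^ 4"

end

theory Submission imports Defs begin

lemma exp_lip: fixes a b :: real assumes "0 \<le> a" "0 \<le> b"
  shows "\<bar>exp (-a) - exp (-b)\<bar> \<le> \<bar>a - b\<bar>"
proof -
  have *: "exp (-a) - exp (-b) \<le> b - a" if "0 \<le> a" "a \<le> b" for a b :: real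
  proof -
    have "exp (-a) - exp (-b) = exp (-a) * (1 - exp (-(b-a)))"
      by (simp add: algebra_simps flip: exp_add)
    also have "\<dots> \<le> 1 * (1 - exp (-(b-a)))"
      apply (rule mult_right_mono) using that by auto
    also have "\<dots> \<le> b - a" using exp_ge_add_one_self[of "a-b"] by (simp; linarith)
    finally show ?thesis .
  qed
  show ?thesis using *[of a b] *[of b a] assms
    by (cases "a \<le> b") (auto simp: abs_if)
qed

lemma meas: "(\<lambda>t::real. exp (- x * t)) \<in> borel_measurable (lebesgue_on {0..})"
  by (intro continuous_imp_measurable_on_sets_lebesgue continuous_intros) auto

lemma LT_int:
  assumes h0: "\<forall>t\<ge>0. 0 \<le> h t" and hi: "(h has_integral 1) {0..}" and x: "(x::real) \<ge> 0"
  shows "(\<lambda>t. exp (- x * t) * h t) integrable_on {0..}"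
proof -
  have "h absolutely_integrable_on {0..}"
    using hi h0 by (intro nonnegative_absolutely_integrable_1) auto
  moreover have "bounded ((\<lambda>t. exp (- x * t)) ` {0..})"
    unfolding bounded_iff
    using x by (intro exI[of _ 1]) (auto simp: mult_nonneg_nonneg)
  ultimately show ?thesis
    using absolutely_integrable_bounded_measurable_product_real[where g=h, OF meas]
    unfolding absolutely_integrable_on_def by simp
qed

lemma LT_lip:
  assumes h0: "\<forall>t\<ge>0. 0 \<le> h t" and hi: "(h has_integral 1) {0..}"
    and mi: "(\<lambda>t. t * h t) integrable_on {0..}"
    and x: "(x::real) \<ge> 0" and y: "y \<ge> 0"
  shows "\<bar>integral {0..} (\<lambda>t. exp (- x * t) * h t) - integral {0..} (\<lambda>t. exp (- y * t) * h t)\<bar>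
     \<le> \<bar>x - y\<bar> * integral {0..} (\<lambda>t. t * h t)"
proof -
  have ix: "(\<lambda>t. exp (- x * t) * h t) integrable_on {0..}" using LT_int[OF h0 hi x] .
  have iy: "(\<lambda>t. exp (- y * t) * h t) integrable_on {0..}" using LT_int[OF h0 hi y] .
  have "integral {0..} (\<lambda>t. exp (- x * t) * h t) - integral {0..} (\<lambda>t. exp (- y * t) * h t)
      = integral {0..} (\<lambda>t. exp (- x * t) * h t - exp (- y * t) * h t)"
    using integral_diff[OF ix iy] by simp
  moreover have "norm (integral {0..} (\<lambda>t. exp (- x * t) * h t - exp (- y * t) * h t)) \<le> integral {0..} (\<lambda>t. \<bar>x - y\<bar> * (t * h t))"
  proof (rule Henstock_Kurzweil_Integration.integral_norm_bound_integral)
    show "(\<lambda>t. exp (- x * t) * h t - exp (- y * t) * h t) integrable_on {0..}"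
      using integrable_diff[OF ix iy] .
    show "(\<lambda>t. \<bar>x - y\<bar> * (t * h t)) integrable_on {0..}"
      using integrable_on_cmult_left[OF mi] by simp
    fix t :: real assume t: "t \<in> {0..}"
      have ht: "h t \<ge> 0" using h0 t by auto
      have "\<bar>exp (- (x * t)) - exp (- (y * t))\<bar> \<le> \<bar>x * t - y * t\<bar>"
        using t x y by (intro exp_lip) auto
      also have "\<dots> = \<bar>x - y\<bar> * t" using t by (simp add: abs_mult flip: left_diff_distrib)
      finally have "\<bar>exp (- (x * t)) - exp (- (y * t))\<bar> * h t \<le> \<bar>x - y\<bar> * t * h t"
        using ht by (rule mult_right_mono)
      thus "norm (exp (- x * t) * h t - exp (- y * t) * h t) \<le> \<bar>x - y\<bar> * (t * h t)"
        using ht by (simp add: abs_mult flip: left_diff_distrib)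
  qed
  ultimately show ?thesis by simp
qed

lemma lip_cont:
  assumes "\<And>x y. x \<in> S \<Longrightarrow> y \<in> S \<Longrightarrow> \<bar>g x - g y\<bar> \<le> \<bar>x - y\<bar> * (M::real)"
  shows "continuous_on S (g :: real \<Rightarrow> real)"
  unfolding continuous_on_iff
proof (intro ballI allI impI)
  fix x e assume x: "x \<in> S" and e: "(0::real) < e"
  have M0: "\<bar>M\<bar> + 1 > 0" by simp
  show "\<exists>d>0. \<forall>x'\<in>S. dist x' x < d \<longrightarrow> dist (g x') (g x) < e"
  proof (intro exI[of _ "e / (\<bar>M\<bar> + 1)"] conjI ballI impI)
    show "e / (\<bar>M\<bar> + 1) > 0" using e M0 by simp
    fix x' assume x': "x' \<in> S" and d: "dist x' x < e / (\<bar>M\<bar> + 1)"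
    have "dist (g x') (g x) \<le> \<bar>x' - x\<bar> * M" using assms[OF x' x] by (simp add: dist_real_def)
    also have "\<dots> \<le> \<bar>x' - x\<bar> * (\<bar>M\<bar> + 1)" by (intro mult_left_mono) auto
    also have "\<dots> < e" using d M0 by (simp add: dist_real_def pos_less_divide_eq)
    finally show "dist (g x') (g x) < e" .
  qed
qed

lemma generic:
  fixes tb \<alpha> \<beta> :: real and g :: "real \<Rightarrow> real"
  assumes tb: "tb > 0" and ab: "\<beta> < \<alpha> - 1" and gc: "continuous_on {0..} g"
    and g0: "g 0 = 1" and gb: "\<And>x. x \<ge> 0 \<Longrightarrow> \<bar>g x\<bar> \<le> 1"
    and gH: "\<And>x. x \<ge> 0 \<Longrightarrow> H (complex_of_real x) = complex_of_real (g x)"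
  shows "\<exists>x::real. x > 0 \<and> char_fun tb \<alpha> \<beta> H (complex_of_real x) = 0"
proof -
  define c where "c = 1 / tb"
  have c: "c > 0" using tb by (simp add: c_def)
  define F where "F x = (x + c)^4 - \<alpha> * (x + c)^2 * c^2 * (g x)^2 + \<beta> * c^4 * (g x)^4" for x
  have cf: "char_fun tb \<alpha> \<beta> H (complex_of_real x) = complex_of_real (F x)" if "x \<ge> 0" for x
    using that by (simp add: char_fun_def gH F_def c_def power_divide field_simps)
  have F0: "F 0 < 0"
  proof -
    have "F 0 = c^4 * (1 - \<alpha> + \<beta>)" by (simp add: F_def g0 algebra_simps power2_eq_square power4_eq_xxxx)
    moreover have "c^4 > 0" using c by simp
    ultimately show ?thesis using ab by (simp add: mult_pos_neg)
  qed
  define X where "X = 1 + (\<bar>\<alpha>\<bar> + \<bar>\<beta>\<bar>) * c^2"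
  have X1: "X \<ge> 1" by (simp add: X_def)
  define u where "u = (X + c)^2"
  define G where "G = (g X)^2"
  have G: "0 \<le> G" "G \<le> 1" using gb[of X] X1 by (auto simp: G_def abs_square_le_1)
  have u1: "u \<ge> X"
  proof -
    have "X + c \<ge> 1" using X1 c by simp
    hence "(X + c) * 1 \<le> (X + c) * (X + c)" by (intro mult_left_mono) auto
    thus ?thesis using c by (simp add: u_def power2_eq_square)
  qed
  have uc: "c^2 \<le> u" unfolding u_def using X1 c by (intro power_mono) auto
  have FX: "F X = u^2 - \<alpha> * u * c^2 * G + \<beta> * c^4 * G^2"
    by (simp add: F_def u_def G_def power_mult_distrib flip: power_mult)
  have t1: "\<alpha> * u * c^2 * G \<le> \<bar>\<alpha>\<bar> * u * c^2"
  proof -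
    have "\<alpha> * u * c^2 * G \<le> \<bar>\<alpha> * u * c^2\<bar> * G" using G by (intro mult_right_mono) auto
    also have "\<dots> \<le> \<bar>\<alpha> * u * c^2\<bar> * 1" using G by (intro mult_left_mono) auto
    moreover have "u \<ge> 0" using uc by (meson order_trans zero_le_power2)
    ultimately show ?thesis by (simp add: abs_mult)
  qed
  have t2: "- (\<bar>\<beta>\<bar> * u * c^2) \<le> \<beta> * c^4 * G^2"
  proof -
    have G2: "0 \<le> G^2" "G^2 \<le> 1" using G by (auto simp: power_le_one)
    have "- (\<bar>\<beta>\<bar> * c^4) \<le> - (\<bar>\<beta>\<bar> * c^4) * G^2"
      using G2 by (simp add: mult_left_le)
    also have "\<dots> \<le> \<beta> * c^4 * G^2" using G2 by (intro mult_right_mono) (auto simp: abs_if)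
    finally have a: "- (\<bar>\<beta>\<bar> * c^4) \<le> \<beta> * c^4 * G^2" .
    have "c^4 = c^2 * c^2" by (simp add: power4_eq_xxxx power2_eq_square)
    also have "\<dots> \<le> u * c^2" using uc by (intro mult_right_mono) auto
    finally have "\<bar>\<beta>\<bar> * c^4 \<le> \<bar>\<beta>\<bar> * (u * c^2)" by (intro mult_left_mono) auto
    thus ?thesis using a by (simp add: mult.assoc)
  qed
  have "u^2 - \<bar>\<alpha>\<bar> * u * c^2 - \<bar>\<beta>\<bar> * u * c^2 = u * (u - (\<bar>\<alpha>\<bar> + \<bar>\<beta>\<bar>) * c^2)"
    by (simp add: algebra_simps power2_eq_square)
  also have "\<dots> \<ge> u * 1" using u1 X1 unfolding X_def by (intro mult_left_mono) (auto simp: u_def)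
  finally have "F X > 0" using FX t1 t2 u1 X1 by linarith
  obtain x where x: "0 \<le> x" "x \<le> X" "F x = 0"
  proof -
    have "continuous_on {0..X} F" unfolding F_def
      by (intro continuous_intros continuous_on_subset[OF gc]) auto
    then show ?thesis using IVT'[of F 0 0 X] F0 \<open>F X > 0\<close> X1 that by auto
  qed
  have "x \<noteq> 0" using x F0 by auto
  thus ?thesis using x cf[of x] by (intro exI[of _ x]) auto
qed

theorem theorem2:
  fixes tb \<alpha> \<beta> :: real and k :: kernel
  assumes "tb > 0" and "valid_kernel k" and "\<beta> < \<alpha> - 1"
  shows "\<exists>x::real. x > 0 \<and> char_fun tb \<alpha> \<beta> (kernel_LT k) (complex_of_real x) = 0"
proof (cases k)
  case (Dirac \<tau>)
  have \<tau>: "\<tau> > 0" using assms(2) Dirac by (simp add: valid_kernel_def)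
  show ?thesis
  proof (rule generic[OF assms(1) assms(3), where g = "\<lambda>x. exp (- x * \<tau>)"])
    show "continuous_on {0..} (\<lambda>x. exp (- x * \<tau>))" by (intro continuous_intros)
    show "exp (- 0 * \<tau>) = 1" by simp
    fix x :: real assume x: "0 \<le> x"
    show "\<bar>exp (- x * \<tau>)\<bar> \<le> 1" using x \<tau> by (simp add: mult_nonneg_nonneg)
    show "kernel_LT k (complex_of_real x) = complex_of_real (exp (- x * \<tau>))"
      by (simp add: Dirac kernel_LT_def exp_of_real flip: of_real_mult of_real_minus)
  qed
next
  case (Density h)
  have h0: "\<forall>t\<ge>0. 0 \<le> h t" and hi: "(h has_integral 1) {0..}"
    and mi: "(\<lambda>t. t * h t) integrable_on {0..}"
    using assms(2) Density by (auto simp: valid_kernel_def)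
  define g where "g x = integral {0..} (\<lambda>t. exp (- x * t) * h t)" for x
  show ?thesis
  proof (rule generic[OF assms(1) assms(3), where g = g])
    show "continuous_on {0..} g"
      by (rule lip_cont[where M = "integral {0..} (\<lambda>t. t * h t)"])
         (use LT_lip[OF h0 hi mi] in \<open>auto simp: g_def\<close>)
    show "g 0 = 1" using hi by (simp add: g_def integral_unique)
    fix x :: real assume x: "0 \<le> x"
    have ix: "(\<lambda>t. exp (- x * t) * h t) integrable_on {0..}" using LT_int[OF h0 hi x] .
    have "g x \<ge> 0" unfolding g_def using h0 by (intro integral_nonneg[OF ix]) auto
    moreover have "g x \<le> integral {0..} h" unfolding g_def
    proof (rule integral_le[OF ix])
      show "h integrable_on {0..}" using hi by blast
      fix t :: real assume t: "t \<in> {0..}"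
      have "exp (- x * t) \<le> 1" using x t by (simp add: mult_nonneg_nonneg)
      thus "exp (- x * t) * h t \<le> h t" using h0 t by (simp add: mult_left_le_one_le)
    qed
    ultimately show "\<bar>g x\<bar> \<le> 1" using hi by (simp add: integral_unique)
    have "((\<lambda>t. complex_of_real (exp (- x * t) * h t)) has_integral complex_of_real (g x)) {0..}"
      unfolding g_def by (intro has_integral_of_real integrable_integral ix)
    hence "integral {0..} (\<lambda>t. complex_of_real (exp (- x * t) * h t)) = complex_of_real (g x)"
      by (rule integral_unique)
    thus "kernel_LT k (complex_of_real x) = complex_of_real (g x)"
      by (simp add: Density kernel_LT_def exp_of_real mult.commute flip: of_real_mult of_real_minus)
  qed
qed

end
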